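(* Let $\mathbf i$ and $\mathbf i'$ be reduced expressions of $w_0$ related by a braid move at positions $k,k+1,k+2$ (i.e. $i_k=i_{k+2}=p$, $i_{k+1}=q$, $i'_k=i'_{k+2}=q$, $i'_{k+1}=p$, $i'_j=i_j$ otherwise, with $p\cdot q=-1$), and assume the standard seed $\mathcal S^{\mathbf i}$ satisfies properties (A), (B), (C). Define $P'_j:=P_{\mathbf s(j)}$ for $j\ne k$, where $\mathbf s$ is the transposition of $k+1$ and $k+2$, and $P'_k:=\tilde P_k/(\beta_{k+1}P_k)$ with $\tilde P_k:=\beta_kP_{\mathrm{in}(k)}$. Then for every $1\le i\le N$ and every $j\in J_{ex}(\mathbf i')$, $$(\beta'_i;P'_j)-(\beta'_i;P'_{j_+(\mathbf i')})\le1.$$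
   Context: $\mathfrak g$ is a complex simple Lie algebra of simply-laced type, vertex set $I=\{1,\dots,n\}$, Cartan entries $i\cdot j$, Weyl group with simple reflections $s_i$, longest element $w_0$, $N=\ell(w_0)$, fundamental weights $\omega_i$. $\overline D:\mathbb C[\mathsf N]\to\mathbb C(\alpha_1,\dots,\alpha_n)$ is the algebra morphism $\overline D(f)=\sum_{\mathbf j}(f,e_{j_1}\cdots e_{j_r})\big(\alpha_{j_1}(\alpha_{j_1}+\alpha_{j_2})\cdots(\alpha_{j_1}+\dots+\alpha_{j_r})\big)^{-1}$ ($\mathbb C[\mathsf N]$ identified with the graded dual of $U(\mathfrak n)$, $e_i$ Chevalley generators, $\alpha_i$ indeterminates). Positive roots are linear forms in the $\alpha_i$; $(\beta;P)$ = multiplicity of $\beta$ in $P$. For a reduced expression $\mathbf i$: $\beta_j=s_{i_1}\cdots s_{i_{j-1}}(\alpha_{i_j})$ (and $\beta'_j$ likewise for $\mathbf i'$); $j_-(\mathbf i)=\max(\{l<j:i_l=i_j\}\cup\{0\})$; $j_+(\mathbf i)=\min(\{l>j:i_l=i_j\}\cup\{N+1\})$; $J_{ex}(\mathbf i)=\{j:j_+(\mathbf i)\le N\}$; flag minors $x_j=D(s_{i_1}\cdots s_{i_j}\omega_{i_j},\omega_{i_j})$. The quiver $Q^{\mathbf i}$ on $\{1,\dots,N\}$ has an ordinary arrow $u\to v$ iff $i_u\cdot i_v=-1$ and $u<v<u_+<v_+$, and a horizontal arrow $u_+\to u$ for $u\in J_{ex}$; $P_{\mathrm{in}(j)}:=P_{j_+}\prod_{l\in\mathrm{inord}(j)}P_l$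 with $\mathrm{inord}(j)$ the sources of ordinary arrows into $j$. Properties: (A) $\overline D(x_j)=1/P_j$ with $P_j$ a product of positive roots; (B) $P_jP_{j_-}=\beta_j\prod_{l<j<l_+,\,i_l\cdot i_j=-1}P_l$ for all $j$, $P_0=1$; (C) $(\beta_i;P_j)-(\beta_i;P_{j_+})\le1$ for $j\in J_{ex}$, $1\le i\le N$. *)

theory Defs
  imports Main "HOL.Real"
begin

text \<open>Root lattice vectors: linear forms in the indeterminates alpha_1..alpha_n,
  represented by their integer coefficient functions (only indices 1..n matter).\<close>
type_synonym rvec = "nat \<Rightarrow> int"

definition simply_laced_cartan :: "nat \<Rightarrow> (nat \<Rightarrow> nat \<Rightarrow> int) \<Rightarrow> bool" where
  "simply_laced_cartan n C \<longleftrightarrow>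
     1 \<le> n \<and>
     (\<forall>i\<in>{1..n}. C i i = 2) \<and>
     (\<forall>i\<in>{1..n}. \<forall>j\<in>{1..n}. C i j = C j i) \<and>
     (\<forall>i\<in>{1..n}. \<forall>j\<in>{1..n}. i \<noteq> j \<longrightarrow> C i j = 0 \<or> C i j = -1) \<and>
     (\<forall>i\<in>{1..n}. \<forall>j\<in>{1..n}.
        (i, j) \<in> ({(a, b). a \<in> {1..n} \<and> b \<in> {1..n} \<and> C a b = -1})\<^sup>*) \<and>
     (\<forall>v :: nat \<Rightarrow> real. (\<exists>i\<in>{1..n}. v i \<noteq> 0) \<longrightarrow>
        (\<Sum>i\<in>{1..n}. \<Sum>j\<in>{1..n}. v i * of_int (C i j) * v j) > 0)"

definition simple_root :: "nat \<Rightarrow> rvec" where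
  "simple_root i = (\<lambda>j. if j = i then 1 else 0)"

text \<open>Simple reflection s_i(v) = v - (v . alpha_i) alpha_i.\<close>
definition srefl :: "nat \<Rightarrow> (nat \<Rightarrow> nat \<Rightarrow> int) \<Rightarrow> nat \<Rightarrow> rvec \<Rightarrow> rvec" where
  "srefl n C i v = (\<lambda>j. if j = i then v j - (\<Sum>l\<in>{1..n}. v l * C l i) else v j)"

definition wact :: "nat \<Rightarrow> (nat \<Rightarrow> nat \<Rightarrow> int) \<Rightarrow> nat list \<Rightarrow> rvec \<Rightarrow> rvec" where
  "wact n C w = foldr (\<lambda>i f. srefl n C i \<circ> f) w id"

definition words :: "nat \<Rightarrow> nat list set" where
  "words n = {w. set w \<subseteq> {1..n}}"

text \<open>Weyl group, realised faithfully on the root lattice.\<close>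
definition weyl :: "nat \<Rightarrow> (nat \<Rightarrow> nat \<Rightarrow> int) \<Rightarrow> (rvec \<Rightarrow> rvec) set" where
  "weyl n C = wact n C ` words n"

definition ell :: "nat \<Rightarrow> (nat \<Rightarrow> nat \<Rightarrow> int) \<Rightarrow> (rvec \<Rightarrow> rvec) \<Rightarrow> nat" where
  "ell n C g = (LEAST r. \<exists>w\<in>words n. length w = r \<and> wact n C w = g)"

definition w0 :: "nat \<Rightarrow> (nat \<Rightarrow> nat \<Rightarrow> int) \<Rightarrow> (rvec \<Rightarrow> rvec)" where
  "w0 n C = (THE g. g \<in> weyl n C \<and> (\<forall>h\<in>weyl n C. ell n C h \<le> ell n C g))"

definition NN :: "nat \<Rightarrow> (nat \<Rightarrow> nat \<Rightarrow> int) \<Rightarrow> nat" where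
  "NN n C = ell n C (w0 n C)"

definition reduced_expr_w0 :: "nat \<Rightarrow> (nat \<Rightarrow> nat \<Rightarrow> int) \<Rightarrow> nat list \<Rightarrow> bool" where
  "reduced_expr_w0 n C ii \<longleftrightarrow>
     ii \<in> words n \<and> wact n C ii = w0 n C \<and> length ii = NN n C"

definition roots :: "nat \<Rightarrow> (nat \<Rightarrow> nat \<Rightarrow> int) \<Rightarrow> rvec set" where
  "roots n C = {wact n C w (simple_root i) | w i. w \<in> words n \<and> i \<in> {1..n}}"

definition pos_roots :: "nat \<Rightarrow> (nat \<Rightarrow> nat \<Rightarrow> int) \<Rightarrow> rvec set" where
  "pos_roots n C = {b \<in> roots n C. \<forall>j. 0 \<le> b j}"

definition letter :: "nat list \<Rightarrow> nat \<Rightarrow> nat" where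
  "letter ii j = ii ! (j - 1)"

definition beta :: "nat \<Rightarrow> (nat \<Rightarrow> nat \<Rightarrow> int) \<Rightarrow> nat list \<Rightarrow> nat \<Rightarrow> rvec" where
  "beta n C ii j = wact n C (take (j - 1) ii) (simple_root (letter ii j))"

definition jminus :: "nat list \<Rightarrow> nat \<Rightarrow> nat" where
  "jminus ii j = Max ({l. 1 \<le> l \<and> l < j \<and> letter ii l = letter ii j} \<union> {0})"

definition jplus :: "nat list \<Rightarrow> nat \<Rightarrow> nat" where
  "jplus ii j = Min ({l. j < l \<and> l \<le> length ii \<and> letter ii l = letter ii j} \<union> {length ii + 1})"

definition Jex :: "nat list \<Rightarrow> nat set" where
  "Jex ii = {j. 1 \<le> j \<and> j \<le> length ii \<and> jplus ii j \<le> length ii}"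

text \<open>Sources of ordinary arrows u -> j in the quiver Q^i.\<close>
definition inord :: "(nat \<Rightarrow> nat \<Rightarrow> int) \<Rightarrow> nat list \<Rightarrow> nat \<Rightarrow> nat set" where
  "inord C ii j = {u. 1 \<le> u \<and> C (letter ii u) (letter ii j) = -1 \<and>
                       u < j \<and> j < jplus ii u \<and> jplus ii u < jplus ii j}"

text \<open>A rational function which is a product of (positive) roots is represented by its
  multiplicity function: P beta = (beta; P).  Products become sums, quotients differences.\<close>
type_synonym rprod = "rvec \<Rightarrow> int"

definition delta_root :: "rvec \<Rightarrow> rprod" where
  "delta_root b = (\<lambda>c. if c = b then 1 else 0)"

text \<open>Properties (A) (only the part "P_j is a product of positive roots", with P_0 = 1),
  (B) and (C) of the family P_0, ..., P_N attached to the seed S^i.\<close>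
definition seed_props :: "nat \<Rightarrow> (nat \<Rightarrow> nat \<Rightarrow> int) \<Rightarrow> nat list \<Rightarrow> (nat \<Rightarrow> rprod) \<Rightarrow> bool" where
  "seed_props n C ii P \<longleftrightarrow>
     P 0 = (\<lambda>_. 0) \<and>
     (\<forall>j\<in>{1..length ii}. (\<forall>b. 0 \<le> P j b) \<and> finite {b. P j b \<noteq> 0} \<and>
         {b. P j b \<noteq> 0} \<subseteq> pos_roots n C) \<and>
     (\<forall>j\<in>{1..length ii}. \<forall>b.
        P j b + P (jminus ii j) b =
          delta_root (beta n C ii j) b +
          (\<Sum>l\<in>{l. 1 \<le> l \<and> l < j \<and> j < jplus ii l \<and>
                     C (letter ii l) (letter ii j) = -1}. P l b)) \<and>
     (\<forall>j\<in>Jex ii. \<forall>i\<in>{1..length ii}.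
        P j (beta n C ii i) - P (jplus ii j) (beta n C ii i) \<le> 1)"

definition braid_move :: "(nat \<Rightarrow> nat \<Rightarrow> int) \<Rightarrow> nat list \<Rightarrow> nat list \<Rightarrow> nat \<Rightarrow> nat \<Rightarrow> nat \<Rightarrow> bool" where
  "braid_move C ii ii' k p q \<longleftrightarrow>
     length ii' = length ii \<and> 1 \<le> k \<and> k + 2 \<le> length ii \<and> C p q = -1 \<and>
     letter ii k = p \<and> letter ii (k+1) = q \<and> letter ii (k+2) = p \<and>
     letter ii' k = q \<and> letter ii' (k+1) = p \<and> letter ii' (k+2) = q \<and>
     (\<forall>j\<in>{1..length ii}. j \<notin> {k, k+1, k+2} \<longrightarrow> letter ii' j = letter ii j)"

definition swp :: "nat \<Rightarrow> nat \<Rightarrow> nat" where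
  "swp k j = (if j = k + 1 then k + 2 else if j = k + 2 then k + 1 else j)"

definition Pnew :: "nat \<Rightarrow> (nat \<Rightarrow> nat \<Rightarrow> int) \<Rightarrow> nat list \<Rightarrow> (nat \<Rightarrow> rprod) \<Rightarrow> nat \<Rightarrow> nat \<Rightarrow> rprod" where
  "Pnew n C ii P k j =
     (if j = k then
        (\<lambda>b. delta_root (beta n C ii k) b + P (jplus ii k) b + (\<Sum>l\<in>inord C ii k. P l b)
             - delta_root (beta n C ii (k+1)) b - P k b)
      else P (swp k j))"

end

theory Submission
  imports Defs
begin



definition bf :: "nat \<Rightarrow> (nat \<Rightarrow> nat \<Rightarrow> int) \<Rightarrow> rvec \<Rightarrow> rvec \<Rightarrow> int" where
  "bf n C v w = (\<Sum>l\<in>{1..n}. \<Sum>m\<in>{1..n}. v l * C l m * w m)"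

definition rfl :: "nat \<Rightarrow> (nat \<Rightarrow> nat \<Rightarrow> int) \<Rightarrow> rvec \<Rightarrow> rvec \<Rightarrow> rvec" where
  "rfl n C b v = (\<lambda>j. v j - bf n C v b * b j)"

definition lin :: "(rvec \<Rightarrow> rvec) \<Rightarrow> bool" where
  "lin g \<longleftrightarrow> (\<forall>v w c. g (\<lambda>j. v j - c * w j) = (\<lambda>j. g v j - c * g w j))"

locale cartan =
  fixes n :: nat and C :: "nat \<Rightarrow> nat \<Rightarrow> int"
  assumes diag: "\<forall>i\<in>{1..n}. C i i = 2"
    and sym: "\<forall>i\<in>{1..n}. \<forall>j\<in>{1..n}. C i j = C j i"
begin

abbreviation "B \<equiv> bf n C"
abbreviation "R \<equiv> rfl n C"
abbreviation "S \<equiv> srefl n C"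
abbreviation "W \<equiv> wact n C"

lemma bf_sym: "B v w = B w v"
  unfolding bf_def
  apply (subst sum.swap)
  apply (intro sum.cong refl)
  using sym by (simp add: mult.commute mult.left_commute)

lemma bf_lin: "B (\<lambda>j. v j - c * w j) u = B v u - c * B w u"
  unfolding bf_def by (simp add: algebra_simps sum_subtractf sum_distrib_left)

lemma bf_lin2: "B u (\<lambda>j. v j - c * w j) = B u v - c * B u w"
  using bf_lin bf_sym by metis

lemma bf_neg2: "B u (\<lambda>j. - w j) = - B u w"
  unfolding bf_def by (simp add: sum_negf)

lemma bf_simple: "i \<in> {1..n} \<Longrightarrow> B v (simple_root i) = (\<Sum>l\<in>{1..n}. v l * C l i)"
proof -
  assume i: "i \<in> {1..n}"
  have "\<And>l. (\<Sum>m\<in>{1..n}. v l * C l m * simple_root i m) = v l * C l i"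
  proof -
    fix l
    have "(\<Sum>m\<in>{1..n}. v l * C l m * simple_root i m) = (\<Sum>m\<in>{1..n}. if m = i then v l * C l m else 0)"
      by (intro sum.cong) (auto simp: simple_root_def)
    also have "\<dots> = v l * C l i" using i by (simp add: sum.delta')
    finally show "(\<Sum>m\<in>{1..n}. v l * C l m * simple_root i m) = v l * C l i" .
  qed
  then show ?thesis unfolding bf_def by simp
qed

lemma bf_ss: "i \<in> {1..n} \<Longrightarrow> B (simple_root i) (simple_root i) = 2"
proof -
  assume i: "i \<in> {1..n}"
  have "(\<Sum>l\<in>{1..n}. simple_root i l * C l i) = (\<Sum>l\<in>{1..n}. if l = i then C l i else 0)"
    by (intro sum.cong) (auto simp: simple_root_def)
  also have "\<dots> = 2" using i diag by (simp add: sum.delta')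
  finally show ?thesis using bf_simple[OF i] by simp
qed

lemma srefl_R: "i \<in> {1..n} \<Longrightarrow> S i = R (simple_root i)"
  apply (simp add: fun_eq_iff srefl_def rfl_def bf_simple)
  apply (simp add: simple_root_def)
  done

lemma R_lin: "R b (\<lambda>j. v j - c * w j) = (\<lambda>j. R b v j - c * R b w j)"
  by (simp add: rfl_def bf_lin fun_eq_iff algebra_simps)

lemma R_pres: "B b b = 2 \<Longrightarrow> B (R b v) (R b w) = B v w"
  unfolding rfl_def
  apply (simp add: bf_lin bf_lin2 bf_sym[of b w])
  done

lemma R_invol: "B b b = 2 \<Longrightarrow> R b (R b v) = v"
proof -
  assume h: "B b b = 2"
  have "B (R b v) b = - B v b" unfolding rfl_def using bf_lin[of v "B v b" b b] h by simp
  then show ?thesis by (simp add: rfl_def fun_eq_iff)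
qed

lemma R_neg: "R (\<lambda>j. - b j) = R b"
  by (simp add: fun_eq_iff rfl_def bf_neg2)

lemma wact_Nil[simp]: "W [] = id" by (simp add: wact_def)
lemma wact_Cons[simp]: "W (a # w) = S a \<circ> W w" by (simp add: wact_def)
lemma wact_append: "W (xs @ ys) = W xs \<circ> W ys"
  by (induction xs) auto

lemma S_invol: "i \<in> {1..n} \<Longrightarrow> S i (S i v) = v"
  using srefl_R R_invol bf_ss by metis

lemma wact_props:
  assumes "set w \<subseteq> {1..n}"
  shows "lin (W w) \<and> (\<forall>v u. B (W w v) (W w u) = B v u) \<and> (\<forall>v. W (rev w) (W w v) = v)"
  using assms
proof (induction w)
  case Nil
  then show ?case by (simp add: lin_def)
next
  case (Cons a w)
  then have a: "a \<in> {1..n}" and IH: "lin (W w)" "\<forall>v u. B (W w v) (W w u) = B v u"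
        "\<forall>v. W (rev w) (W w v) = v" by auto
  have "lin (W (a # w))"
    using IH(1) unfolding lin_def by (simp add: srefl_R[OF a] R_lin)
  moreover have "\<forall>v u. B (W (a#w) v) (W (a#w) u) = B v u"
    using IH(2) by (simp add: srefl_R[OF a] R_pres bf_ss[OF a])
  moreover have "\<forall>v. W (rev (a#w)) (W (a#w) v) = v"
    using IH(3) by (simp add: wact_append S_invol[OF a])
  ultimately show ?case by blast
qed

lemma wact_inj:
  assumes "set w \<subseteq> {1..n}" "W w x = W w y" shows "x = y"
  using wact_props[OF assms(1)] assms(2) by metis

lemma wact_comm:
  assumes "set w \<subseteq> {1..n}"
  shows "W w (R b v) = R (W w b) (W w v)"
proof -
  have l: "lin (W w)" and pr: "\<forall>v u. B (W w v) (W w u) = B v u" using wact_props[OF assms] by auto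
  have "W w (R b v) = (\<lambda>j. W w v j - B v b * W w b j)"
    using l unfolding lin_def rfl_def by simp
  also have "\<dots> = R (W w b) (W w v)" using pr by (simp add: rfl_def)
  finally show ?thesis .
qed


lemma S_self: "x \<in> {1..n} \<Longrightarrow> S x (simple_root x) = (\<lambda>j. - simple_root x j)"
  using bf_ss[of x] by (simp add: srefl_R rfl_def fun_eq_iff)

lemma distinct_beta:
  assumes red: "reduced_expr_w0 n C ii" and a: "1 \<le> a" "a < b" "b \<le> length ii"
  shows "beta n C ii a \<noteq> beta n C ii b"
proof
  assume eq: "beta n C ii a = beta n C ii b"
  have ws: "set ii \<subseteq> {1..n}" using red by (simp add: reduced_expr_w0_def words_def)
  define X where "X = take (a-1) ii"
  define T where "T = take (b-1) ii"
  define Y where "Y = drop a T"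
  define Z where "Z = drop b ii"
  define x where "x = ii ! (a-1)"
  define y where "y = ii ! (b-1)"
  have a1: "a - 1 < length ii" and b1: "b - 1 < length ii" using a by auto
  have x: "x \<in> {1..n}" using ws nth_mem[OF a1] unfolding x_def by blast
  have y: "y \<in> {1..n}" using ws nth_mem[OF b1] unfolding y_def by blast
  have ii_eq: "ii = T @ [y] @ Z"
  proof -
    have "ii = take (b-1) ii @ ii!(b-1) # drop (Suc (b-1)) ii" by (rule id_take_nth_drop[OF b1])
    moreover have "Suc (b-1) = b" using a by simp
    ultimately show ?thesis unfolding T_def y_def Z_def by simp
  qed
  have lenT: "length T = b - 1" unfolding T_def using a by simp
  have T_eq: "T = X @ [x] @ Y"
  proof -
    have "a - 1 < length T" using lenT a by simp
    then have "T = take (a-1) T @ T!(a-1) # drop (Suc (a-1)) T" by (rule id_take_nth_drop)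
    moreover have "take (a-1) T = X" unfolding X_def T_def using a by (simp add: min_def)
    moreover have "T!(a-1) = x" unfolding T_def x_def using a by simp
    moreover have "Suc (a-1) = a" using a by simp
    ultimately show ?thesis unfolding Y_def by simp
  qed
  have sX: "set X \<subseteq> {1..n}" unfolding X_def using ws by (meson set_take_subset subset_trans)
  have sT: "set T \<subseteq> {1..n}" unfolding T_def using ws by (meson set_take_subset subset_trans)
  have sY: "set Y \<subseteq> {1..n}" using sT T_eq by auto
  have sZ: "set Z \<subseteq> {1..n}" unfolding Z_def using ws by (meson set_drop_subset subset_trans)
  have ba: "beta n C ii a = W X (simple_root x)"
    unfolding beta_def letter_def X_def x_def by simp
  have bb: "beta n C ii b = W X (S x (W Y (simple_root y)))"
  proof -
    have "beta n C ii b = W T (simple_root y)" unfolding beta_def letter_def y_def T_def by simp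
    then show ?thesis using T_eq by (simp add: wact_append)
  qed
  have "simple_root x = S x (W Y (simple_root y))"
    using eq ba bb wact_inj[OF sX] by metis
  then have "S x (simple_root x) = W Y (simple_root y)" using S_invol[OF x] by metis
  then have key: "W Y (simple_root y) = (\<lambda>j. - simple_root x j)" using S_self[OF x] by simp
  have comm: "W Y (S y v) = S x (W Y v)" for v
    using wact_comm[OF sY, of "simple_root y" v] key R_neg srefl_R[OF x] srefl_R[OF y] by simp
  have "W ii = W (X @ Y @ Z)"
  proof
    fix v
    have "W ii v = W X (S x (W Y (S y (W Z v))))" using ii_eq T_eq by (simp add: wact_append)
    also have "\<dots> = W X (W Y (W Z v))" using comm S_invol[OF x] by simp
    finally show "W ii v = W (X @ Y @ Z) v" by (simp add: wact_append)
  qed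
  moreover have "set (X @ Y @ Z) \<subseteq> {1..n}" using sX sY sZ by auto
  moreover have "length (X @ Y @ Z) = length ii - 2"
    using a lenT unfolding X_def Y_def Z_def by simp
  ultimately have "\<exists>w\<in>words n. length w = length ii - 2 \<and> W w = w0 n C"
    using red unfolding reduced_expr_w0_def words_def by (intro bexI[of _ "X@Y@Z"]) auto
  then have "ell n C (w0 n C) \<le> length ii - 2"
    unfolding ell_def by (rule Least_le)
  moreover have "ell n C (w0 n C) = length ii" using red by (simp add: reduced_expr_w0_def NN_def)
  ultimately show False using a by simp
qed

end



lemma jplus_fin: "finite ({l. j < l \<and> l \<le> length ii \<and> letter ii l = letter ii j} \<union> {length ii + 1})"
  by (rule finite_subset[of _ "{0..length ii + 1}"]) auto

lemma jplus_le: "j \<le> length ii \<Longrightarrow> j < jplus ii j \<and> jplus ii j \<le> length ii + 1"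
proof -
  assume j: "j \<le> length ii"
  let ?A = "{l. j < l \<and> l \<le> length ii \<and> letter ii l = letter ii j} \<union> {length ii + 1}"
  have "jplus ii j \<in> ?A" unfolding jplus_def by (rule Min_in[OF jplus_fin]) auto
  moreover have "jplus ii j \<le> length ii + 1" unfolding jplus_def by (rule Min_le[OF jplus_fin]) auto
  ultimately show ?thesis using j by auto
qed

lemma jplus_in: "jplus ii j \<le> length ii \<Longrightarrow> j < jplus ii j \<and> letter ii (jplus ii j) = letter ii j \<and>
   (\<forall>x. j < x \<and> x < jplus ii j \<longrightarrow> letter ii x \<noteq> letter ii j)"
proof -
  assume J: "jplus ii j \<le> length ii"
  let ?A = "{l. j < l \<and> l \<le> length ii \<and> letter ii l = letter ii j} \<union> {length ii + 1}"
  have "jplus ii j \<in> ?A" unfolding jplus_def by (rule Min_in[OF jplus_fin]) auto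
  moreover have "\<forall>x\<in>?A. jplus ii j \<le> x" unfolding jplus_def using Min_le[OF jplus_fin] by blast
  ultimately show ?thesis using J by force
qed

lemma jplus_none: "jplus ii j = length ii + 1 \<Longrightarrow> j < x \<Longrightarrow> x \<le> length ii \<Longrightarrow> letter ii x \<noteq> letter ii j"
proof
  assume "jplus ii j = length ii + 1" "j < x" "x \<le> length ii" "letter ii x = letter ii j"
  then have "jplus ii j \<le> x" unfolding jplus_def by (intro Min_le[OF jplus_fin]) auto
  then show False using \<open>jplus ii j = length ii + 1\<close> \<open>x \<le> length ii\<close> by simp
qed

lemma jplus_eqI: "j < l \<Longrightarrow> l \<le> length ii \<Longrightarrow> letter ii l = letter ii j \<Longrightarrow>
   (\<forall>x. j < x \<and> x < l \<longrightarrow> letter ii x \<noteq> letter ii j) \<Longrightarrow> jplus ii j = l"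
  unfolding jplus_def
  apply (rule Min_eqI[OF jplus_fin])
   apply (auto simp: not_less[symmetric])
  done

lemma jminus_fin: "finite ({l. 1 \<le> l \<and> l < j \<and> letter ii l = letter ii j} \<union> {0})"
  by (rule finite_subset[of _ "{0..j}"]) auto

lemma jminus_props: "(jminus ii j = 0 \<and> (\<forall>x. 1 \<le> x \<and> x < j \<longrightarrow> letter ii x \<noteq> letter ii j)) \<or>
  (1 \<le> jminus ii j \<and> jminus ii j < j \<and> letter ii (jminus ii j) = letter ii j \<and>
   (\<forall>x. jminus ii j < x \<and> x < j \<longrightarrow> letter ii x \<noteq> letter ii j))"
proof -
  let ?A = "{l. 1 \<le> l \<and> l < j \<and> letter ii l = letter ii j} \<union> {0}"
  have i: "jminus ii j \<in> ?A" unfolding jminus_def by (rule Max_in[OF jminus_fin]) auto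
  have m: "\<forall>x\<in>?A. x \<le> jminus ii j" unfolding jminus_def using Max_ge[OF jminus_fin] by blast
  show ?thesis
  proof (cases "jminus ii j = 0")
    case True
    then show ?thesis using m by force
  next
    case False
    have 1: "1 \<le> jminus ii j \<and> jminus ii j < j \<and> letter ii (jminus ii j) = letter ii j"
      using i False by auto
    have "\<forall>x. jminus ii j < x \<and> x < j \<longrightarrow> letter ii x \<noteq> letter ii j"
    proof (intro allI impI)
      fix x assume x: "jminus ii j < x \<and> x < j"
      show "letter ii x \<noteq> letter ii j"
      proof
        assume "letter ii x = letter ii j"
        then have "x \<le> jminus ii j" using m x 1 by auto
        then show False using x by simp
      qed
    qed
    then show ?thesis using 1 by blast
  qed
qed

lemma jminus_eqI: "1 \<le> a \<Longrightarrow> a < j \<Longrightarrow> letter ii a = letter ii j \<Longrightarrow>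
   (\<forall>x. a < x \<and> x < j \<longrightarrow> letter ii x \<noteq> letter ii j) \<Longrightarrow> jminus ii j = a"
  unfolding jminus_def
  apply (rule Max_eqI[OF jminus_fin])
   apply (auto simp: not_less[symmetric])
  done




context cartan begin

lemma bf_ab: "a \<in> {1..n} \<Longrightarrow> b \<in> {1..n} \<Longrightarrow> B (simple_root a) (simple_root b) = C a b"
proof -
  assume a: "a \<in> {1..n}" and b: "b \<in> {1..n}"
  have "(\<Sum>l\<in>{1..n}. simple_root a l * C l b) = (\<Sum>l\<in>{1..n}. if l = a then C l b else 0)"
    by (intro sum.cong) (auto simp: simple_root_def)
  also have "\<dots> = C a b" using a by (simp add: sum.delta')
  finally show ?thesis using bf_simple[OF b] by simp
qed

lemma braid_roots:
  assumes x: "x \<in> {1..n}" and y: "y \<in> {1..n}" and xy: "x \<noteq> y" "C x y = -1" "C y x = -1"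
  shows "S y (simple_root x) = (\<lambda>j. simple_root x j + simple_root y j)"
    and "S x (\<lambda>j. simple_root x j + simple_root y j) = simple_root y"
proof -
  show "S y (simple_root x) = (\<lambda>j. simple_root x j + simple_root y j)"
    using bf_ab[OF x y] xy by (simp add: srefl_R[OF y] rfl_def)
  have e: "(\<lambda>j. simple_root x j + simple_root y j) = (\<lambda>j. simple_root x j - (-1) * simple_root y j)" by simp
  have "B (\<lambda>j. simple_root x j + simple_root y j) (simple_root x) = 1"
    unfolding e bf_lin using bf_ab[OF x x] bf_ab[OF y x] xy diag x by simp
  then show "S x (\<lambda>j. simple_root x j + simple_root y j) = simple_root y"
    by (simp add: srefl_R[OF x] rfl_def fun_eq_iff)
qed

end

locale bsetup =
  fixes n :: nat and C :: "nat \<Rightarrow> nat \<Rightarrow> int"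
    and ii ii' :: "nat list" and k p q :: nat and P :: "nat \<Rightarrow> rvec \<Rightarrow> int"
  assumes cart: "simply_laced_cartan n C"
    and red: "reduced_expr_w0 n C ii" and red': "reduced_expr_w0 n C ii'"
    and braid: "braid_move C ii ii' k p q"
    and seed: "seed_props n C ii P"
begin

sublocale cartan n C using cart by unfold_locales (auto simp: simply_laced_cartan_def)

abbreviation "N \<equiv> length ii"
abbreviation "L \<equiv> letter ii"
abbreviation "L' \<equiv> letter ii'"
abbreviation "bt \<equiv> beta n C ii"
abbreviation "bt' \<equiv> beta n C ii'"

lemma len': "length ii' = N" using braid by (simp add: braid_move_def)
lemma NN: "NN n C = N" using red by (simp add: reduced_expr_w0_def)
lemma ws: "set ii \<subseteq> {1..n}" using red by (simp add: reduced_expr_w0_def words_def)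
lemma ws': "set ii' \<subseteq> {1..n}" using red' by (simp add: reduced_expr_w0_def words_def)
lemma kk: "1 \<le> k" "k + 2 \<le> N" using braid by (auto simp: braid_move_def)
lemma Lk: "L k = p" "L (k+1) = q" "L (k+2) = p" "L' k = q" "L' (k+1) = p" "L' (k+2) = q"
  using braid by (auto simp: braid_move_def)
lemma Cpq: "C p q = -1" using braid by (simp add: braid_move_def)
lemma Lsame: "1 \<le> j \<Longrightarrow> j \<le> N \<Longrightarrow> j \<noteq> k \<Longrightarrow> j \<noteq> k+1 \<Longrightarrow> j \<noteq> k+2 \<Longrightarrow> L' j = L j"
  using braid by (auto simp: braid_move_def)
lemma Lrange: "1 \<le> j \<Longrightarrow> j \<le> N \<Longrightarrow> L j \<in> {1..n}"
  using ws unfolding letter_def by (metis Suc_le_eq Suc_pred' diff_less less_le_trans nth_mem subsetD zero_less_one less_imp_diff_less)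
lemma pq: "p \<in> {1..n}" "q \<in> {1..n}"
  using Lrange[of k] Lrange[of "k+1"] kk Lk by auto
lemma pnq: "p \<noteq> q" using Cpq diag pq by auto
lemma Cqp: "C q p = -1" using Cpq sym pq by auto

lemma nthsame: "t < N \<Longrightarrow> t + 1 \<noteq> k \<Longrightarrow> t + 1 \<noteq> k+1 \<Longrightarrow> t+1 \<noteq> k+2 \<Longrightarrow> ii' ! t = ii ! t"
  using Lsame[of "t+1"] unfolding letter_def by simp

lemma take_same: "s \<le> k - 1 \<Longrightarrow> take s ii' = take s ii"
  apply (rule nth_equalityI)
  using len' kk apply simp
  apply (simp only: nth_take length_take)
  apply (rule nthsame)
  using kk len' by auto

lemma drop_same: "drop (k+2) ii' = drop (k+2) ii"
  apply (rule nth_equalityI)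
  using len' kk apply simp
  using nthsame kk len' by simp

lemma wprops: "set w \<subseteq> {1..n} \<Longrightarrow> W w (W (rev w) v) = v"
  using wact_props[of "rev w"] by simp

lemma take_braid_same: "W (take (k+2) ii') = W (take (k+2) ii)"
proof
  fix v
  define D where "D = drop (k+2) ii"
  have sD: "set D \<subseteq> {1..n}" unfolding D_def using ws by (meson set_drop_subset subset_trans)
  have "W ii = W ii'" using red red' by (simp add: reduced_expr_w0_def)
  then have "W (take (k+2) ii @ D) = W (take (k+2) ii' @ D)"
    using drop_same unfolding D_def by (metis append_take_drop_id)
  then have "W (take (k+2) ii) (W D (W (rev D) v)) = W (take (k+2) ii') (W D (W (rev D) v))"
    by (simp add: wact_append fun_eq_iff)
  then show "W (take (k+2) ii') v = W (take (k+2) ii) v" using wprops[OF sD] by simp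
qed

end



context bsetup begin

lemma nth_k: "ii ! (k-1) = p" "ii ! k = q" "ii' ! (k-1) = q" "ii' ! k = p"
  using Lk kk unfolding letter_def by (auto simp: add.commute)

lemma takes: "take k ii = take (k-1) ii @ [p]" "take (k+1) ii = take (k-1) ii @ [p,q]"
   "take k ii' = take (k-1) ii @ [q]" "take (k+1) ii' = take (k-1) ii @ [q,p]"
proof -
  have k: "k = Suc (k-1)" using kk by simp
  have l1: "k - 1 < N" "k < N" using kk by auto
  have t1: "take k ii = take (k-1) ii @ [p]"
    using take_Suc_conv_app_nth[of "k-1" ii] l1 k nth_k by simp
  have t1': "take k ii' = take (k-1) ii @ [q]"
    using take_Suc_conv_app_nth[of "k-1" ii'] l1 k nth_k len' take_same[of "k-1"] by simp
  show "take k ii = take (k-1) ii @ [p]" by (fact t1)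
  show "take k ii' = take (k-1) ii @ [q]" by (fact t1')
  show "take (k+1) ii = take (k-1) ii @ [p,q]"
    using take_Suc_conv_app_nth[of k ii] l1 t1 nth_k by simp
  show "take (k+1) ii' = take (k-1) ii @ [q,p]"
    using take_Suc_conv_app_nth[of k ii'] l1 t1' nth_k len' by simp
qed

lemma roots: "1 \<le> i \<Longrightarrow> i \<le> N \<Longrightarrow> \<exists>i''. 1 \<le> i'' \<and> i'' \<le> N \<and> bt' i = bt i''"
proof -
  assume i: "1 \<le> i" "i \<le> N"
  define X where "X = take (k-1) ii"
  have sX: "set X \<subseteq> {1..n}" unfolding X_def using ws by (meson set_take_subset subset_trans)
  have br1: "S q (simple_root p) = (\<lambda>j. simple_root p j + simple_root q j)"
       "S p (\<lambda>j. simple_root p j + simple_root q j) = simple_root q"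
    using braid_roots[of p q] pq pnq Cpq Cqp by auto
  have br2: "S p (simple_root q) = (\<lambda>j. simple_root p j + simple_root q j)"
       "S q (\<lambda>j. simple_root p j + simple_root q j) = simple_root p"
    using braid_roots[of q p] pq pnq Cpq Cqp by (auto simp: add.commute)
  consider "i < k" | "i = k" | "i = k+1" | "i = k+2" | "k+2 < i" by linarith
  then show ?thesis
  proof cases
    case 1
    then have "bt' i = bt i" unfolding beta_def using take_same[of "i-1"] Lsame[of i] i by simp
    then show ?thesis using i by blast
  next
    case 2
    have "bt' i = W X (simple_root q)" unfolding beta_def X_def using 2 take_same[of "k-1"] Lk by simp
    also have "\<dots> = bt (k+2)" unfolding beta_def X_def using takes Lk br1 by (simp add: wact_append)
    finally show ?thesis using kk by (intro exI[of _ "k+2"]) auto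
  next
    case 3
    have "bt' i = W X (S q (simple_root p))" unfolding beta_def X_def using 3 takes Lk by (simp add: wact_append)
    also have "\<dots> = bt (k+1)" unfolding beta_def X_def using takes Lk br1 br2 by (simp add: wact_append)
    finally show ?thesis using kk by (intro exI[of _ "k+1"]) auto
  next
    case 4
    have "bt' i = W X (S q (S p (simple_root q)))" unfolding beta_def X_def using 4 takes Lk by (simp add: wact_append)
    also have "\<dots> = bt k" unfolding beta_def X_def using takes Lk br1 br2 by (simp add: wact_append)
    finally show ?thesis using kk by (intro exI[of _ "k"]) auto
  next
    case 5
    obtain r where e: "i - 1 = k + 2 + r" using 5 by (intro that[of "i - 1 - (k+2)"]) simp
    have "take (i-1) ii' = take (k+2) ii' @ take r (drop (k+2) ii')" unfolding e by (rule take_add)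
    then have A: "take (i-1) ii' = take (k+2) ii' @ take r (drop (k+2) ii)" using drop_same by simp
    have "take (i-1) ii = take (k+2) ii @ take r (drop (k+2) ii)" unfolding e by (rule take_add)
    moreover note A
    ultimately have "W (take (i-1) ii') = W (take (i-1) ii)" using take_braid_same by (simp add: wact_append)
    then have "bt' i = bt i" unfolding beta_def using Lsame[of i] i 5 by simp
    then show ?thesis using i by blast
  qed
qed

end



context bsetup begin

definition Sset :: "nat \<Rightarrow> nat set" where
  "Sset j = {l. 1 \<le> l \<and> l < j \<and> j < jplus ii l \<and> C (L l) (L j) = -1}"

lemma P0: "P 0 = (\<lambda>_. 0)" using seed by (simp add: seed_props_def)
lemma nonneg1: "1 \<le> x \<Longrightarrow> x \<le> N \<Longrightarrow> 0 \<le> P x b" using seed by (simp add: seed_props_def)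
lemma nonneg: "x \<le> N \<Longrightarrow> 0 \<le> P x b"
  using nonneg1[of x b] P0 by (cases "x = 0") auto
lemma Bj: "1 \<le> j \<Longrightarrow> j \<le> N \<Longrightarrow>
   P j b + P (jminus ii j) b = delta_root (bt j) b + (\<Sum>l\<in>Sset j. P l b)"
  using seed unfolding seed_props_def Sset_def by auto
lemma Cp: "1 \<le> j \<Longrightarrow> j \<le> N \<Longrightarrow> jplus ii j \<le> N \<Longrightarrow> 1 \<le> i \<Longrightarrow> i \<le> N \<Longrightarrow>
   P j (bt i) - P (jplus ii j) (bt i) \<le> 1"
  using seed unfolding seed_props_def Jex_def by auto

lemma jminus_le: "jminus ii j \<le> j"
  using jminus_props[of ii j] by auto

lemma support: "j \<le> N \<Longrightarrow> P j b \<noteq> 0 \<Longrightarrow> \<exists>l. 1 \<le> l \<and> l \<le> j \<and> b = bt l"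
proof (induction j rule: less_induct)
  case (less j)
  show ?case
  proof (rule ccontr)
    assume nb: "\<not> (\<exists>l. 1 \<le> l \<and> l \<le> j \<and> b = bt l)"
    have j1: "1 \<le> j" using less.prems P0 by (cases j) auto
    have d: "delta_root (bt j) b = 0" using nb j1 by (auto simp: delta_root_def)
    have s: "(\<Sum>l\<in>Sset j. P l b) = 0"
    proof (rule sum.neutral, rule ballI)
      fix l assume l: "l \<in> Sset j"
      then have "l < j" unfolding Sset_def by auto
      then show "P l b = 0" using less.IH[of l] nb less.prems by fastforce
    qed
    have "0 \<le> P (jminus ii j) b" using nonneg jminus_le less.prems by (meson le_trans)
    moreover have "0 \<le> P j b" using nonneg less.prems by simp
    ultimately have "P j b = 0" using Bj[OF j1 less.prems(1), of b] d s by simp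
    then show False using less.prems by simp
  qed
qed

lemma vanish: "x < y \<Longrightarrow> 1 \<le> y \<Longrightarrow> y \<le> N \<Longrightarrow> P x (bt y) = 0"
proof (rule ccontr)
  assume a: "x < y" "1 \<le> y" "y \<le> N" "P x (bt y) \<noteq> 0"
  then obtain l where l: "1 \<le> l" "l \<le> x" "bt y = bt l" using support[of x "bt y"] by auto
  then show False using distinct_beta[OF red, of l y] a by simp
qed

lemma dist: "1 \<le> a \<Longrightarrow> a < b \<Longrightarrow> b \<le> N \<Longrightarrow> bt a \<noteq> bt b"
  using distinct_beta[OF red] by simp

lemma only_prev: "1 \<le> l \<Longrightarrow> l < j \<Longrightarrow> j \<le> N \<Longrightarrow> jplus ii l = j \<Longrightarrow> jminus ii j = l"
  using jplus_in[of ii l] by (intro jminus_eqI) auto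

abbreviation "j0 \<equiv> jminus ii k"
abbreviation "m \<equiv> jminus ii (k+1)"

lemma j0p: "j0 < k" "1 \<le> j0 \<Longrightarrow> jplus ii j0 = k"
proof -
  show "j0 < k" using jminus_props[of ii k] kk by auto
  assume "1 \<le> j0"
  then show "jplus ii j0 = k" using jminus_props[of ii k] kk by (intro jplus_eqI) auto
qed

lemma mp: "m < k" "1 \<le> m \<Longrightarrow> jplus ii m = k+1" "1 \<le> m \<Longrightarrow> L m = q"
proof -
  have "m \<noteq> k" using jminus_props[of ii "k+1"] Lk pnq kk by auto
  then show "m < k" using jminus_props[of ii "k+1"] by auto
  assume "1 \<le> m"
  then show "jplus ii m = k+1" using jminus_props[of ii "k+1"] kk by (intro jplus_eqI) auto
  show "L m = q" using jminus_props[of ii "k+1"] Lk \<open>1 \<le> m\<close> by auto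
qed

lemma jpk: "jplus ii k = k+2"
  using Lk pnq kk by (intro jplus_eqI) (auto simp: less_Suc_eq)

lemma jpk1: "k+2 < jplus ii (k+1)"
proof -
  have "k+1 < jplus ii (k+1)" using jplus_le[of "k+1" ii] kk by simp
  moreover have "jplus ii (k+1) \<noteq> k+2"
    using jplus_in[of ii "k+1"] kk Lk pnq by auto
  ultimately show ?thesis by simp
qed

definition S2 :: "nat set" where
  "S2 = {l. 1 \<le> l \<and> l < k \<and> k+2 < jplus ii l \<and> C (L l) p = -1}"

lemma S2fin: "finite S2" unfolding S2_def by (rule finite_subset[of _ "{0..k}"]) auto

lemma Cpp: "C p p \<noteq> -1" using diag pq by auto

lemma Sset_k: "(\<Sum>l\<in>Sset k. P l b) = (\<Sum>l\<in>S2. P l b) + P m b"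
proof -
  have sub: "l \<in> Sset k \<longleftrightarrow> l \<in> S2 \<or> (1 \<le> m \<and> l = m)" for l
  proof
    assume l: "l \<in> Sset k"
    then have l1: "1 \<le> l" "l < k" "k < jplus ii l" "C (L l) p = -1" unfolding Sset_def using Lk by auto
    have "jplus ii l \<le> N + 1" using jplus_le[of l ii] l1 kk by simp
    consider "jplus ii l = k+1" | "jplus ii l = k+2" | "k+2 < jplus ii l" using l1 by linarith
    then show "l \<in> S2 \<or> (1 \<le> m \<and> l = m)"
    proof cases
      case 1
      then have "m = l" using only_prev[of l "k+1"] l1 kk by simp
      then show ?thesis using l1 by simp
    next
      case 2
      then have "L l = p" using jplus_in[of ii l] kk Lk by auto
      then show ?thesis using l1 Cpp by simp
    next
      case 3
      then show ?thesis using l1 unfolding S2_def by simp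
    qed
  next
    assume "l \<in> S2 \<or> (1 \<le> m \<and> l = m)"
    then show "l \<in> Sset k"
    proof
      assume "l \<in> S2" then show ?thesis unfolding S2_def Sset_def using Lk by auto
    next
      assume "1 \<le> m \<and> l = m"
      then show ?thesis unfolding Sset_def using mp Lk Cqp by auto
    qed
  qed
  show ?thesis
  proof (cases "1 \<le> m")
    case True
    have "Sset k = insert m S2" using sub True by auto
    moreover have "m \<notin> S2" using mp True unfolding S2_def by auto
    ultimately show ?thesis using S2fin by simp
  next
    case False
    then have "Sset k = S2" using sub by auto
    moreover have "m = 0" using False by simp
    ultimately show ?thesis using P0 by simp
  qed
qed

lemma Sset_k2: "(\<Sum>l\<in>Sset (k+2). P l b) = (\<Sum>l\<in>S2. P l b) + P (k+1) b"
proof -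
  have "Sset (k+2) = insert (k+1) S2"
  proof (rule set_eqI)
    fix l
    show "l \<in> Sset (k+2) \<longleftrightarrow> l \<in> insert (k+1) S2"
    proof
      assume l: "l \<in> Sset (k+2)"
      then have l1: "1 \<le> l" "l < k+2" "k+2 < jplus ii l" "C (L l) p = -1" unfolding Sset_def using Lk by auto
      have "l \<noteq> k" using l1 Lk Cpp by auto
      then show "l \<in> insert (k+1) S2" using l1 unfolding S2_def by auto
    next
      assume "l \<in> insert (k+1) S2"
      then show "l \<in> Sset (k+2)" unfolding S2_def Sset_def using Lk Cqp jpk1 kk by auto
    qed
  qed
  moreover have "k+1 \<notin> S2" unfolding S2_def by auto
  ultimately show ?thesis using S2fin by simp
qed

lemma inord_k: "(\<Sum>l\<in>inord C ii k. P l b) = P m b"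
proof -
  have sub: "l \<in> inord C ii k \<longleftrightarrow> (1 \<le> m \<and> l = m)" for l
  proof
    assume "l \<in> inord C ii k"
    then have l1: "1 \<le> l" "l < k" "jplus ii l = k+1" unfolding inord_def jpk by auto
    then have "m = l" using only_prev[of l "k+1"] kk by simp
    then show "1 \<le> m \<and> l = m" using l1 by simp
  next
    assume "1 \<le> m \<and> l = m"
    then show "l \<in> inord C ii k" unfolding inord_def jpk using mp Lk Cqp by auto
  qed
  show ?thesis
  proof (cases "1 \<le> m")
    case True
    then have "inord C ii k = {m}" using sub by auto
    then show ?thesis by simp
  next
    case False
    then have "inord C ii k = {}" using sub by auto
    moreover have "m = 0" using False by simp
    ultimately show ?thesis using P0 by simp
  qed
qed

lemma Pnew_k: "Pnew n C ii P k k b = delta_root (bt k) b + P (k+2) b + P m b - delta_root (bt (k+1)) b - P k b"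
  unfolding Pnew_def using inord_k jpk by simp

lemma Pnew_ne: "j \<noteq> k \<Longrightarrow> Pnew n C ii P k j b = P (swp k j) b"
  unfolding Pnew_def by simp

lemma Bk: "P k b + P j0 b = delta_root (bt k) b + (\<Sum>l\<in>S2. P l b) + P m b"
  using Bj[of k b] kk Sset_k by simp

lemma Bk2: "P (k+2) b + P k b = delta_root (bt (k+2)) b + (\<Sum>l\<in>S2. P l b) + P (k+1) b"
proof -
  have "jminus ii (k+2) = k" using Lk pnq kk by (intro jminus_eqI) (auto simp: less_Suc_eq)
  then show ?thesis using Bj[of "k+2" b] kk Sset_k2 by simp
qed

end



context bsetup begin

lemma dl: "delta_root c b = (if b = c then 1 else 0)" by (simp add: delta_root_def)

lemma swp_id: "x \<noteq> k+1 \<Longrightarrow> x \<noteq> k+2 \<Longrightarrow> swp k x = x" by (simp add: swp_def)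

lemma main:
  assumes i: "1 \<le> i" "i \<le> N" and jJ: "j \<in> Jex ii'"
  shows "Pnew n C ii P k j (bt' i) - Pnew n C ii P k (jplus ii' j) (bt' i) \<le> 1"
proof -
  obtain i'' where i'': "1 \<le> i''" "i'' \<le> N" "bt' i = bt i''" using roots[OF i] by blast
  define b where "b = bt' i"
  define J' where "J' = jplus ii' j"
  have j: "1 \<le> j" "j \<le> N" "J' \<le> N" using jJ len' unfolding Jex_def J'_def by auto
  have Jp: "j < J'" "L' J' = L' j" "\<forall>x. j < x \<and> x < J' \<longrightarrow> L' x \<noteq> L' j"
    using jplus_in[of ii' j] j len' unfolding J'_def by auto
  have Cb: "1 \<le> a \<Longrightarrow> a \<le> N \<Longrightarrow> jplus ii a \<le> N \<Longrightarrow> P a b - P (jplus ii a) b \<le> 1" for a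
    using Cp[of a i''] i'' unfolding b_def by simp
  have nn: "x \<le> N \<Longrightarrow> 0 \<le> P x b" for x using nonneg by simp
  have Bk': "P k b + P j0 b = delta_root (bt k) b + (\<Sum>l\<in>S2. P l b) + P m b" by (rule Bk)
  have Bk2': "P (k+2) b + P k b = delta_root (bt (k+2)) b + (\<Sum>l\<in>S2. P l b) + P (k+1) b" by (rule Bk2)
  have Pk': "Pnew n C ii P k k b = delta_root (bt k) b + P (k+2) b + P m b - delta_root (bt (k+1)) b - P k b"
    by (rule Pnew_k)
  have d01: "0 \<le> delta_root c b" "delta_root c b \<le> 1" for c by (auto simp: dl)
  have goal_eq: "?thesis \<longleftrightarrow> Pnew n C ii P k j b - Pnew n C ii P k J' b \<le> 1"
    unfolding b_def J'_def by simp
  consider "j = k" | "j = k+1" | "j = k+2" | "k+2 < j" | "j < k" by linarith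
  then show ?thesis
  proof cases
    case 1
    have J: "J' = k+2" unfolding J'_def 1 using Lk pnq kk len' by (intro jplus_eqI) (auto simp: less_Suc_eq)
    have PJ: "Pnew n C ii P k J' b = P (k+1) b" using J Pnew_ne[of "k+2"] by (simp add: swp_def)
    have "Pnew n C ii P k k b - P (k+1) b \<le> 1"
    proof (cases "b = bt (k+2)")
      case True
      have "P j0 b = 0" using True vanish[of j0 "k+2"] j0p kk by simp
      moreover have "delta_root (bt (k+1)) b = 0" using True dist[of "k+1" "k+2"] kk by (simp add: dl)
      moreover have "0 \<le> P k b" using nn kk by simp
      ultimately show ?thesis using Bk' Bk2' Pk' d01[of "bt k"] d01[of "bt (k+1)"] d01[of "bt (k+2)"] by linarith
    next
      case False
      have dk2: "delta_root (bt (k+2)) b = 0" using False by (simp add: dl)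
      have "P j0 b - P k b \<le> 1"
      proof (cases "1 \<le> j0")
        case True
        then show ?thesis using Cb[of j0] j0p kk by simp
      next
        case False
        then have "j0 = 0" by simp
        then show ?thesis using P0 nn[of k] kk by simp
      qed
      then show ?thesis using Bk' Bk2' Pk' d01[of "bt k"] d01[of "bt (k+1)"] d01[of "bt (k+2)"] dk2 by linarith
    qed
    then show ?thesis using goal_eq PJ 1 by simp
  next
    case 2
    have Lj: "L' j = p" using 2 Lk by simp
    have "J' \<noteq> k+2" using Jp(2) Lk pnq 2 by auto
    then have J3: "k+2 < J'" using Jp(1) 2 by simp
    have LJ: "L J' = L' J'" using Lsame[of J'] J3 j by simp
    have jp: "jplus ii (k+2) = J'"
    proof (rule jplus_eqI)
      show "k + 2 < J'" "J' \<le> N" using J3 j by auto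
      show "L J' = L (k+2)" using LJ Jp Lj Lk by simp
      show "\<forall>x. k + 2 < x \<and> x < J' \<longrightarrow> L x \<noteq> L (k + 2)"
      proof (intro allI impI)
        fix x assume x: "k + 2 < x \<and> x < J'"
        then have "L x = L' x" using Lsame[of x] j kk by simp
        then show "L x \<noteq> L (k+2)" using Jp x 2 Lj Lk by auto
      qed
    qed
    have "Pnew n C ii P k j b = P (k+2) b" using 2 Pnew_ne[of j] by (simp add: swp_def)
    moreover have "Pnew n C ii P k J' b = P J' b" using J3 Pnew_ne[of J'] swp_id by simp
    ultimately show ?thesis using goal_eq Cb[of "k+2"] jp kk j by simp
  next
    case 3
    have Lj: "L' j = q" using 3 Lk by simp
    have J3: "k+2 < J'" using Jp 3 by simp
    have LJ: "L J' = L' J'" using Lsame[of J'] J3 j by simp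
    have jp: "jplus ii (k+1) = J'"
    proof (rule jplus_eqI)
      show "k + 1 < J'" "J' \<le> N" using J3 j by auto
      show "L J' = L (k+1)" using LJ Jp Lj Lk by simp
      show "\<forall>x. k + 1 < x \<and> x < J' \<longrightarrow> L x \<noteq> L (k + 1)"
      proof (intro allI impI)
        fix x assume x: "k + 1 < x \<and> x < J'"
        show "L x \<noteq> L (k+1)"
        proof (cases "x = k+2")
          case True then show ?thesis using Lk pnq by simp
        next
          case False
          then have "L x = L' x" using Lsame[of x] x j kk by simp
          then show ?thesis using Jp x 3 Lj Lk False by auto
        qed
      qed
    qed
    have "Pnew n C ii P k j b = P (k+1) b" using 3 Pnew_ne[of j] by (simp add: swp_def)
    moreover have "Pnew n C ii P k J' b = P J' b" using J3 Pnew_ne[of J'] swp_id by simp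
    ultimately show ?thesis using goal_eq Cb[of "k+1"] jp kk j by simp
  next
    case 4
    have LJ: "L J' = L' J'" using Lsame[of J'] Jp 4 j by simp
    have Lj: "L j = L' j" using Lsame[of j] 4 j by simp
    have jp: "jplus ii j = J'"
    proof (rule jplus_eqI)
      show "j < J'" "J' \<le> N" using Jp j by auto
      show "L J' = L j" using LJ Lj Jp by simp
      show "\<forall>x. j < x \<and> x < J' \<longrightarrow> L x \<noteq> L j"
      proof (intro allI impI)
        fix x assume x: "j < x \<and> x < J'"
        then have "L x = L' x" using Lsame[of x] j 4 by simp
        then show "L x \<noteq> L j" using Jp x Lj by auto
      qed
    qed
    have "Pnew n C ii P k j b = P j b" using 4 Pnew_ne[of j] swp_id by simp
    moreover have "Pnew n C ii P k J' b = P J' b" using Jp 4 Pnew_ne[of J'] swp_id by simp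
    ultimately show ?thesis using goal_eq Cb[of j] jp j by simp
  next
    case 5
    have Lj: "L j = L' j" using Lsame[of j] 5 j by simp
    have Pj: "Pnew n C ii P k j b = P j b" using 5 Pnew_ne[of j] swp_id by simp
    consider "J' = k" | "J' = k+1" | "J' = k+2" | "J' \<noteq> k \<and> J' \<noteq> k+1 \<and> J' \<noteq> k+2" by blast
    then show ?thesis
    proof cases
      case c1: 1
      have Ljq: "L j = q" using Lj Jp c1 Lk by simp
      have "jplus ii j = k+1"
      proof (rule jplus_eqI)
        show "j < k+1" "k+1 \<le> N" using 5 kk by auto
        show "L (k+1) = L j" using Ljq Lk by simp
        show "\<forall>x. j < x \<and> x < k+1 \<longrightarrow> L x \<noteq> L j"
        proof (intro allI impI)
          fix x assume x: "j < x \<and> x < k+1"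
          show "L x \<noteq> L j"
          proof (cases "x = k")
            case True then show ?thesis using Lk Ljq pnq by simp
          next
            case False
            then have "L x = L' x" using Lsame[of x] x j kk by simp
            then show ?thesis using Jp x c1 Lj False by auto
          qed
        qed
      qed
      then have mj: "m = j" using only_prev[of j "k+1"] j 5 kk by simp
      have PJ: "Pnew n C ii P k J' b = Pnew n C ii P k k b" using c1 by simp
      have ck: "P k b - P (k+2) b \<le> 1" using Cb[of k] jpk kk by simp
      have "P m b - Pnew n C ii P k k b \<le> 1"
      proof (cases "b = bt (k+1)")
        case True
        have "P k b = 0" using True vanish[of k "k+1"] kk by simp
        moreover have "delta_root (bt k) b = 0" using True dist[of k "k+1"] kk by (simp add: dl)
        moreover have "0 \<le> P (k+2) b" using nn kk by simp
        ultimately show ?thesis using Pk' d01[of "bt k"] d01[of "bt (k+1)"] d01[of "bt (k+2)"] by linarith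
      next
        case False
        then have "delta_root (bt (k+1)) b = 0" by (simp add: dl)
        then show ?thesis using Pk' d01[of "bt k"] d01[of "bt (k+1)"] d01[of "bt (k+2)"] ck by linarith
      qed
      then show ?thesis using goal_eq PJ Pj mj by simp
    next
      case c2: 2
      have Ljp: "L j = p" using Lj Jp c2 Lk by simp
      have "jplus ii j = k"
      proof (rule jplus_eqI)
        show "j < k" "k \<le> N" using 5 kk by auto
        show "L k = L j" using Ljp Lk by simp
        show "\<forall>x. j < x \<and> x < k \<longrightarrow> L x \<noteq> L j"
        proof (intro allI impI)
          fix x assume x: "j < x \<and> x < k"
          then have "L x = L' x" using Lsame[of x] j kk by simp
          then show "L x \<noteq> L j" using Jp x c2 Lj by auto
        qed
      qed
      then have jj0: "j0 = j" using only_prev[of j k] j 5 kk by simp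
      have PJ: "Pnew n C ii P k J' b = P (k+2) b" using c2 Pnew_ne[of "k+1"] by (simp add: swp_def)
      have "P j0 b - P (k+2) b \<le> 1"
      proof (cases "b = bt k")
        case True
        have "P m b = 0" using True vanish[of m k] mp kk by simp
        moreover have "delta_root (bt (k+2)) b = 0" using True dist[of k "k+2"] kk by (simp add: dl)
        moreover have "0 \<le> P (k+1) b" using nn kk by simp
        ultimately show ?thesis using Bk' Bk2' d01[of "bt k"] d01[of "bt (k+1)"] d01[of "bt (k+2)"] by linarith
      next
        case False
        have dk: "delta_root (bt k) b = 0" using False by (simp add: dl)
        have "P m b - P (k+1) b \<le> 1"
        proof (cases "1 \<le> m")
          case True
          then show ?thesis using Cb[of m] mp kk by simp
        next
          case False
          then have "m = 0" by simp
          then show ?thesis using P0 nn[of "k+1"] kk by simp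
        qed
        then show ?thesis using Bk' Bk2' d01[of "bt k"] d01[of "bt (k+1)"] d01[of "bt (k+2)"] dk by linarith
      qed
      then show ?thesis using goal_eq PJ Pj jj0 by simp
    next
      case c3: 3
      have "L' k \<noteq> L' j" using Jp c3 5 by simp
      moreover have "L' k = L' j" using Jp c3 Lk by simp
      ultimately show ?thesis by simp
    next
      case c4: 4
      have LJ: "L J' = L' J'" using Lsame[of J'] Jp c4 j by simp
      have jp: "jplus ii j = J'"
      proof (rule jplus_eqI)
        show "j < J'" "J' \<le> N" using Jp j by auto
        show "L J' = L j" using LJ Lj Jp by simp
        show "\<forall>x. j < x \<and> x < J' \<longrightarrow> L x \<noteq> L j"
        proof (intro allI impI)
          fix x assume x: "j < x \<and> x < J'"
          show "L x \<noteq> L j"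
          proof (cases "x = k \<or> x = k+1 \<or> x = k+2")
            case True
            then have "k+2 < J'" using x c4 by auto
            then have "L' k \<noteq> L' j" "L' (k+1) \<noteq> L' j" using Jp 5 by auto
            then have "L j \<noteq> q" "L j \<noteq> p" using Lk Lj by auto
            then show ?thesis using True Lk by auto
          next
            case False
            then have "L x = L' x" using Lsame[of x] x j by simp
            then show ?thesis using Jp x Lj by auto
          qed
        qed
      qed
      have "Pnew n C ii P k J' b = P J' b" using c4 Pnew_ne[of J'] swp_id by simp
      then show ?thesis using goal_eq Pj Cb[of j] jp j by simp
    qed
  qed
qed

end


theorem proposition6p9:
  fixes n :: nat and C :: "nat \<Rightarrow> nat \<Rightarrow> int"
    and ii ii' :: "nat list" and k p q :: nat and P :: "nat \<Rightarrow> rvec \<Rightarrow> int"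
  assumes "simply_laced_cartan n C"
    and "reduced_expr_w0 n C ii" and "reduced_expr_w0 n C ii'"
    and "braid_move C ii ii' k p q"
    and "seed_props n C ii P"
  shows "\<forall>i\<in>{1..NN n C}. \<forall>j\<in>Jex ii'.
           Pnew n C ii P k j (beta n C ii' i) - Pnew n C ii P k (jplus ii' j) (beta n C ii' i) \<le> 1"
proof -
  interpret bsetup n C ii ii' k p q P using assms by unfold_locales
  show ?thesis using main NN by auto
qed

end
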